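(* Let $M\preceq\mathbb{C}$ be small, $C\supseteq M$ full, and suppose $\langle A,B\rangle$ is an $M$-f.s. sequence over $C$. Let $B=B_1\sqcup B_2$ be any partition of $B$. Then $\langle A,B_1,B_2\rangle$ is an $M$-f.s. sequence over $C$ if and only if $\langle B_1,B_2\rangle$ is an $M$-f.s. sequence over $C$.
   Context: Work in a monster model $\mathbb{C}$ of an arbitrary complete theory. For $D\supseteq M$, $\mathrm{tp}(X/D)$ is finitely satisfied in $M$ if each of its formulas is satisfied by a tuple from $M$. $C\supseteq M$ is full if every type in $S_n(M)$, for every $n$, is realized in $C$. An $M$-f.s. sequence over $C$ is a sequence of sets $\langle A_i:i\in I\rangle$ with $\mathrm{tp}(A_i/A_{<i}C)$ finitely satisfied in $M$ for every $i$, where $A_{<i}=\bigcup_{j<i}A_j$. *)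

theory Defs
  imports Main
begin

datatype 'f trm = Var nat | Fn 'f "'f trm list"

datatype ('f, 'r) fm =
    Eq "'f trm" "'f trm"
  | Rel 'r "'f trm list"
  | Neg "('f, 'r) fm"
  | Conj "('f, 'r) fm" "('f, 'r) fm"
  | Ex nat "('f, 'r) fm"

record ('a, 'f, 'r) struc =
  funs :: "'f \<Rightarrow> 'a list \<Rightarrow> 'a"
  rels :: "'r \<Rightarrow> 'a list \<Rightarrow> bool"

fun evalt :: "('a, 'f, 'r) struc \<Rightarrow> (nat \<Rightarrow> 'a) \<Rightarrow> 'f trm \<Rightarrow> 'a" where
  "evalt S e (Var v) = e v"
| "evalt S e (Fn f ts) = funs S f (map (evalt S e) ts)"

fun fvt :: "'f trm \<Rightarrow> nat set" where
  "fvt (Var v) = {v}"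
| "fvt (Fn f ts) = \<Union> (set (map fvt ts))"

fun fv :: "('f, 'r) fm \<Rightarrow> nat set" where
  "fv (Eq s t) = fvt s \<union> fvt t"
| "fv (Rel r ts) = \<Union> (set (map fvt ts))"
| "fv (Neg \<phi>) = fv \<phi>"
| "fv (Conj \<phi> \<psi>) = fv \<phi> \<union> fv \<psi>"
| "fv (Ex x \<phi>) = fv \<phi> - {x}"

fun sat_in :: "'a set \<Rightarrow> ('a, 'f, 'r) struc \<Rightarrow> ('f, 'r) fm \<Rightarrow> (nat \<Rightarrow> 'a) \<Rightarrow> bool" where
  "sat_in U S (Eq s t) e = (evalt S e s = evalt S e t)"
| "sat_in U S (Rel r ts) e = rels S r (map (evalt S e) ts)"
| "sat_in U S (Neg \<phi>) e = (\<not> sat_in U S \<phi> e)"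
| "sat_in U S (Conj \<phi> \<psi>) e = (sat_in U S \<phi> e \<and> sat_in U S \<psi> e)"
| "sat_in U S (Ex x \<phi>) e = (\<exists>a\<in>U. sat_in U S \<phi> (e(x := a)))"

text \<open>Satisfaction in the whole structure (the monster model has universe UNIV).\<close>
abbreviation sat :: "('a, 'f, 'r) struc \<Rightarrow> ('f, 'r) fm \<Rightarrow> (nat \<Rightarrow> 'a) \<Rightarrow> bool" where
  "sat S \<equiv> sat_in UNIV S"

definition elementary_sub :: "('a, 'f, 'r) struc \<Rightarrow> 'a set \<Rightarrow> bool" where
  "elementary_sub S M \<longleftrightarrow> M \<noteq> {}
     \<and> (\<forall>f xs. set xs \<subseteq> M \<longrightarrow> funs S f xs \<in> M)
     \<and> (\<forall>\<phi> e. range e \<subseteq> M \<longrightarrow> (sat_in M S \<phi> e \<longleftrightarrow> sat S \<phi> e))"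

text \<open>"small" = of cardinality strictly below the saturation cardinal kappa = |K|.\<close>
definition small :: "'k set \<Rightarrow> 'a set \<Rightarrow> bool" where
  "small K X \<longleftrightarrow> (card_of X, card_of K) \<in> ordLess"

definition saturated :: "('a, 'f, 'r) struc \<Rightarrow> 'k set \<Rightarrow> bool" where
  "saturated S K \<longleftrightarrow> (\<forall>P \<Sigma>. small K P
     \<longrightarrow> (\<forall>(\<phi>, e) \<in> \<Sigma>. \<forall>v \<in> fv \<phi> - {0}. e v \<in> P)
     \<longrightarrow> (\<forall>F \<subseteq> \<Sigma>. finite F \<longrightarrow> (\<exists>a. \<forall>(\<phi>, e) \<in> F. sat S \<phi> (e(0 := a))))
     \<longrightarrow> (\<exists>a. \<forall>(\<phi>, e) \<in> \<Sigma>. sat S \<phi> (e(0 := a))))"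

definition elem_map :: "('a, 'f, 'r) struc \<Rightarrow> 'a set \<Rightarrow> ('a \<Rightarrow> 'a) \<Rightarrow> bool" where
  "elem_map S D f \<longleftrightarrow> (\<forall>\<phi> e. (\<forall>v \<in> fv \<phi>. e v \<in> D) \<longrightarrow> (sat S \<phi> e \<longleftrightarrow> sat S \<phi> (f \<circ> e)))"

definition automorphism :: "('a, 'f, 'r) struc \<Rightarrow> ('a \<Rightarrow> 'a) \<Rightarrow> bool" where
  "automorphism S g \<longleftrightarrow> bij g
     \<and> (\<forall>f xs. g (funs S f xs) = funs S f (map g xs))
     \<and> (\<forall>r xs. rels S r xs \<longleftrightarrow> rels S r (map g xs))"

definition strongly_homogeneous :: "('a, 'f, 'r) struc \<Rightarrow> 'k set \<Rightarrow> bool" where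
  "strongly_homogeneous S K \<longleftrightarrow> (\<forall>D f. small K D \<longrightarrow> elem_map S D f
     \<longrightarrow> (\<exists>g. automorphism S g \<and> (\<forall>x \<in> D. g x = f x)))"

text \<open>A monster model: kappa-saturated and strongly kappa-homogeneous, kappa > |L| + aleph_0.\<close>
definition monster :: "('a, 'f, 'r) struc \<Rightarrow> 'k set \<Rightarrow> bool" where
  "monster S K \<longleftrightarrow> (card_of (UNIV :: ('f, 'r) fm set), card_of K) \<in> ordLess
     \<and> saturated S K \<and> strongly_homogeneous S K"

text \<open>Formulas over M in the variables 0..n-1: pairs (phi, e) with parameters e v in M for v >= n.\<close>
definition over :: "'a set \<Rightarrow> nat \<Rightarrow> (('f, 'r) fm \<times> (nat \<Rightarrow> 'a)) set" where
  "over M n = {(\<phi>, e). \<forall>v. n \<le> v \<longrightarrow> e v \<in> M}"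

definition realizes :: "('a, 'f, 'r) struc \<Rightarrow> nat \<Rightarrow> (nat \<Rightarrow> 'a) \<Rightarrow> (('f, 'r) fm \<times> (nat \<Rightarrow> 'a)) set \<Rightarrow> bool" where
  "realizes S n a p \<longleftrightarrow> (\<forall>(\<phi>, e) \<in> p. sat S \<phi> (\<lambda>v. if v < n then a v else e v))"

text \<open>p in S_n(M): a complete set of formulas over M consistent with the elementary diagram.\<close>
definition complete_type :: "('a, 'f, 'r) struc \<Rightarrow> 'a set \<Rightarrow> nat \<Rightarrow> (('f, 'r) fm \<times> (nat \<Rightarrow> 'a)) set \<Rightarrow> bool" where
  "complete_type S M n p \<longleftrightarrow> p \<subseteq> over M n
     \<and> (\<forall>(\<phi>, e) \<in> over M n. (\<phi>, e) \<in> p \<or> (Neg \<phi>, e) \<in> p)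
     \<and> (\<forall>F \<subseteq> p. finite F \<longrightarrow> (\<exists>a. realizes S n a F))"

definition full :: "('a, 'f, 'r) struc \<Rightarrow> 'a set \<Rightarrow> 'a set \<Rightarrow> bool" where
  "full S M C \<longleftrightarrow> M \<subseteq> C \<and> (\<forall>n p. complete_type S M n p
     \<longrightarrow> (\<exists>c. (\<forall>i < n. c i \<in> C) \<and> realizes S n c p))"

text \<open>tp(X/D) is finitely satisfied in M: whenever sat phi e with the variables in V assigned
  elements of X and the remaining free variables assigned elements of D, the X-part can be
  replaced by elements of M.\<close>
definition fin_sat :: "('a, 'f, 'r) struc \<Rightarrow> 'a set \<Rightarrow> 'a set \<Rightarrow> 'a set \<Rightarrow> bool" where
  "fin_sat S M X D \<longleftrightarrow> (\<forall>\<phi> e V. (\<forall>v \<in> V. e v \<in> X) \<longrightarrow> (\<forall>v \<in> fv \<phi> - V. e v \<in> D)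
     \<longrightarrow> sat S \<phi> e
     \<longrightarrow> (\<exists>e'. (\<forall>v \<in> V. e' v \<in> M) \<and> (\<forall>v. v \<notin> V \<longrightarrow> e' v = e v) \<and> sat S \<phi> e'))"

definition fs_seq :: "('a, 'f, 'r) struc \<Rightarrow> 'a set \<Rightarrow> 'a set \<Rightarrow> 'a set list \<Rightarrow> bool" where
  "fs_seq S M C As \<longleftrightarrow> (\<forall>i < length As. fin_sat S M (As ! i) (\<Union> (set (take i As)) \<union> C))"

end

theory Submission imports Defs begin

fun rent :: "(nat \<Rightarrow> nat) \<Rightarrow> 'f trm \<Rightarrow> 'f trm" where
  "rent \<rho> (Var v) = Var (\<rho> v)"
| "rent \<rho> (Fn f ts) = Fn f (map (rent \<rho>) ts)"

fun ren :: "(nat \<Rightarrow> nat) \<Rightarrow> ('f,'r) fm \<Rightarrow> ('f,'r) fm" where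
  "ren \<rho> (Eq s t) = Eq (rent \<rho> s) (rent \<rho> t)"
| "ren \<rho> (Rel r ts) = Rel r (map (rent \<rho>) ts)"
| "ren \<rho> (Neg \<phi>) = Neg (ren \<rho> \<phi>)"
| "ren \<rho> (Conj \<phi> \<psi>) = Conj (ren \<rho> \<phi>) (ren \<rho> \<psi>)"
| "ren \<rho> (Ex x \<phi>) = Ex (\<rho> x) (ren \<rho> \<phi>)"

lemma evalt_rent: "evalt S e (rent \<rho> t) = evalt S (e \<circ> \<rho>) t"
  by (induction t) (auto cong: map_cong)

lemma fvt_rent: "fvt (rent \<rho> t) = \<rho> ` fvt t"
  by (induction t) auto

lemma sat_ren: "inj \<rho> \<Longrightarrow> sat_in U S (ren \<rho> \<phi>) e = sat_in U S \<phi> (e \<circ> \<rho>)"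
proof (induction \<phi> arbitrary: e)
  case (Ex x \<phi>)
  have *: "\<And>a. (e(\<rho> x := a)) \<circ> \<rho> = (e \<circ> \<rho>)(x := a)"
    using Ex.prems by (auto simp: fun_eq_iff inj_eq)
  have "sat_in U S (ren \<rho> (Ex x \<phi>)) e = (\<exists>a\<in>U. sat_in U S \<phi> ((e(\<rho> x := a)) \<circ> \<rho>))"
    unfolding ren.simps sat_in.simps using Ex.IH[OF Ex.prems] by blast
  also have "\<dots> = (\<exists>a\<in>U. sat_in U S \<phi> ((e \<circ> \<rho>)(x := a)))" using * by presburger
  finally show ?case unfolding sat_in.simps(5) .
qed (auto simp: evalt_rent comp_def)

lemma fv_ren: "inj \<rho> \<Longrightarrow> fv (ren \<rho> \<phi>) = \<rho> ` fv \<phi>"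
  by (induction \<phi>) (auto simp: fvt_rent inj_eq)

lemma evalt_cong: "(\<forall>v\<in>fvt t. e1 v = e2 v) \<Longrightarrow> evalt S e1 t = evalt S e2 t"
  by (induction t) (auto cong: map_cong)

lemma sat_cong: "(\<forall>v\<in>fv \<phi>. e1 v = e2 v) \<Longrightarrow> sat_in U S \<phi> e1 = sat_in U S \<phi> e2"
proof (induction \<phi> arbitrary: e1 e2)
  case (Eq s t) then show ?case using evalt_cong[of s e1 e2 S] evalt_cong[of t e1 e2 S] by auto
next
  case (Rel r ts)
  have "\<forall>t\<in>set ts. \<forall>v\<in>fvt t. e1 v = e2 v" using Rel.prems by auto
  then have "map (evalt S e1) ts = map (evalt S e2) ts"
    by (intro map_cong refl) (blast intro: evalt_cong)
  then show ?case unfolding sat_in.simps(2) by (rule arg_cong[where f="rels S r"])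
next
  case (Ex x \<phi>)
  have "\<And>a. sat_in U S \<phi> (e1(x := a)) = sat_in U S \<phi> (e2(x := a))"
    by (rule Ex.IH) (use Ex.prems in auto)
  then show ?case unfolding sat_in.simps(5) by blast
next
  case (Neg \<phi>) then show ?case by (metis fv.simps(3) sat_in.simps(3))
next
  case (Conj \<phi> \<psi>)
  have "sat_in U S \<phi> e1 = sat_in U S \<phi> e2" by (rule Conj.IH(1)) (use Conj.prems in auto)
  moreover have "sat_in U S \<psi> e1 = sat_in U S \<psi> e2" by (rule Conj.IH(2)) (use Conj.prems in auto)
  ultimately show ?case by simp
qed

lemma finite_fvt: "finite (fvt t)" by (induction t) auto
lemma finite_fv: "finite (fv \<phi>)" by (induction \<phi>) (auto simp: finite_fvt)

lemma fin_satD: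
  assumes "fin_sat S M X D" "\<forall>v\<in>V. e v \<in> X" "\<forall>v\<in>fv \<phi> - V. e v \<in> D" "sat S \<phi> e"
  shows "\<exists>e'. (\<forall>v\<in>V. e' v \<in> M) \<and> (\<forall>v. v \<notin> V \<longrightarrow> e' v = e v) \<and> sat S \<phi> e'"
proof -
  have "\<forall>\<phi> e V. (\<forall>v \<in> V. e v \<in> X) \<longrightarrow> (\<forall>v \<in> fv \<phi> - V. e v \<in> D)
     \<longrightarrow> sat S \<phi> e
     \<longrightarrow> (\<exists>e'. (\<forall>v \<in> V. e' v \<in> M) \<and> (\<forall>v. v \<notin> V \<longrightarrow> e' v = e v) \<and> sat S \<phi> e')"
    using assms(1) unfolding fin_sat_def .
  then have "(\<forall>v \<in> V. e v \<in> X) \<longrightarrow> (\<forall>v \<in> fv \<phi> - V. e v \<in> D)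
     \<longrightarrow> sat S \<phi> e
     \<longrightarrow> (\<exists>e'. (\<forall>v \<in> V. e' v \<in> M) \<and> (\<forall>v. v \<notin> V \<longrightarrow> e' v = e v) \<and> sat S \<phi> e')"
    by (elim allE)
  then show ?thesis using assms(2-4) by (elim impE)
qed
lemma fin_satI:
  assumes "\<And>\<phi> e V. \<forall>v\<in>V. e v \<in> X \<Longrightarrow> \<forall>v\<in>fv \<phi> - V. e v \<in> D \<Longrightarrow> sat S \<phi> e \<Longrightarrow>
     \<exists>e'. (\<forall>v\<in>V. e' v \<in> M) \<and> (\<forall>v. v \<notin> V \<longrightarrow> e' v = e v) \<and> sat S \<phi> e'"
  shows "fin_sat S M X D"
  unfolding fin_sat_def using assms by (intro allI impI)
lemma fin_sat_monoD: "fin_sat S M X D \<Longrightarrow> D' \<subseteq> D \<Longrightarrow> fin_sat S M X D'"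
  by (rule fin_satI, erule fin_satD) auto
lemma fin_sat_monoX: "fin_sat S M X D \<Longrightarrow> X' \<subseteq> X \<Longrightarrow> fin_sat S M X' D"
  by (rule fin_satI, erule fin_satD) auto

lemma allSuc: "(\<forall>i<Suc n. P i) \<longleftrightarrow> P 0 \<and> (\<forall>i<n. P (Suc i))"
  by (auto simp: less_Suc_eq_0_disj)
lemma fs2: "fs_seq S M C [X, Y] \<longleftrightarrow> fin_sat S M X C \<and> fin_sat S M Y (X \<union> C)"
  unfolding fs_seq_def by (simp add: allSuc)
lemma fs3: "fs_seq S M C [X, Y, Z] \<longleftrightarrow> fin_sat S M X C \<and> fin_sat S M Y (X \<union> C)
   \<and> fin_sat S M Z (X \<union> Y \<union> C)"
  unfolding fs_seq_def by (simp add: allSuc Un_assoc)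

definition ovr :: "(nat \<Rightarrow> 'a) \<Rightarrow> (nat \<Rightarrow> 'a) \<Rightarrow> nat set \<Rightarrow> nat \<Rightarrow> 'a" where
  "ovr f e W = (\<lambda>v. if v \<in> W then e v else f v)"

definition sameM :: "('a, 'f, 'r) struc \<Rightarrow> 'a set \<Rightarrow> nat set \<Rightarrow> (nat \<Rightarrow> 'a) \<Rightarrow> (nat \<Rightarrow> 'a) \<Rightarrow> bool" where
  "sameM S M W e1 e2 \<longleftrightarrow> (\<forall>\<psi> f. (\<forall>v. v \<notin> W \<longrightarrow> f v \<in> M) \<longrightarrow>
      (sat S \<psi> (ovr f e1 W) \<longleftrightarrow> sat S \<psi> (ovr f e2 W)))"

lemma sameM_sym: "sameM S M W e1 e2 \<Longrightarrow> sameM S M W e2 e1"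
  unfolding sameM_def by blast

lemma full_sameM:
  fixes S :: "('a, 'f, 'r) struc"
  assumes "full S M C" "finite W" "m0 \<in> M"
  shows "\<exists>c. (\<forall>v\<in>W. c v \<in> C) \<and> sameM S M W e c"
proof -
  define n where "n = Suc (Max (W \<union> {0}))"
  have Wn: "\<forall>v\<in>W. v < n" unfolding n_def using assms(2)
    by (metis Max_ge finite_insert insert_is_Un le_imp_less_Suc sup_commute UnI1)
  define mix where "mix a f = (\<lambda>v::nat. if v < n then a v else f v)" for a f :: "nat \<Rightarrow> 'a"
  define p where "p = {(\<psi>, f). (\<psi>, f) \<in> over M n \<and> sat S \<psi> (mix e f)}"
  have mixr: "realizes S n a F = (\<forall>(\<psi>, f)\<in>F. sat S \<psi> (mix a f))" for a F
    unfolding realizes_def mix_def by simp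
  have "complete_type S M n p"
    unfolding complete_type_def
  proof (intro conjI allI impI)
    show "p \<subseteq> over M n" unfolding p_def by auto
    show "\<forall>(\<phi>, e)\<in>over M n. (\<phi>, e) \<in> p \<or> (Neg \<phi>, e) \<in> p"
      unfolding p_def over_def by auto
    fix F assume "F \<subseteq> p"
    then show "\<exists>a. realizes S n a F" unfolding mixr p_def by (intro exI[of _ e]) auto
  qed
  then obtain c where c: "\<forall>i<n. c i \<in> C" "realizes S n c p"
    using assms(1) unfolding full_def by blast
  have key: "sat S \<psi> (mix e f) = sat S \<psi> (mix c f)" if "(\<psi>, f) \<in> over M n" for \<psi> f
  proof -
    have "(\<psi>, f) \<in> over M n" "(Neg \<psi>, f) \<in> over M n" using that unfolding over_def by auto
    moreover have h: "\<forall>a b. (a,b) \<in> over M n \<and> sat S a (mix e b) \<longrightarrow> sat S a (mix c b)"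
      using c(2) unfolding mixr p_def by auto
    ultimately show ?thesis using h[rule_format, of \<psi> f] h[rule_format, of "Neg \<psi>" f] by auto
  qed
  have "sameM S M W e c"
    unfolding sameM_def
  proof (intro allI impI)
    fix \<psi> :: "('f, 'r) fm" and f :: "nat \<Rightarrow> 'a"
    assume fM: "\<forall>v. v \<notin> W \<longrightarrow> f v \<in> M"
    define \<tau> where "\<tau> v = (if v \<in> W then v else v + n)" for v
    have inj: "inj \<tau>" unfolding inj_def \<tau>_def using Wn by auto
    define fs where "fs v = (if n \<le> v \<and> v - n \<notin> W then f (v - n) else m0)" for v
    have ov: "(ren \<tau> \<psi>, fs) \<in> over M n" unfolding over_def fs_def using fM assms(3) by auto
    have comp: "mix a fs \<circ> \<tau> = ovr f a W" for a
      unfolding mix_def ovr_def fs_def \<tau>_def using Wn by (auto simp: fun_eq_iff)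
    show "sat S \<psi> (ovr f e W) = sat S \<psi> (ovr f c W)"
      using key[OF ov] sat_ren[OF inj] comp by metis
  qed
  then show ?thesis using c(1) Wn by blast
qed

lemma inv1:
  assumes fs: "fin_sat S M X D" and MD: "M \<subseteq> D" and m0: "m0 \<in> M"
    and sm: "sameM S M W e1 e2" and UW: "U \<inter> W = {}"
    and hU: "\<forall>v\<in>U. e1 v \<in> X" and hW1: "\<forall>v\<in>W. e1 v \<in> D" and hW2: "\<forall>v\<in>W. e2 v \<in> D"
    and off: "\<forall>v. v \<notin> W \<longrightarrow> e1 v = e2 v"
    and rest: "\<forall>v\<in>fv \<phi>. v \<notin> U \<longrightarrow> v \<notin> W \<longrightarrow> e1 v \<in> M"
    and s1: "sat S \<phi> e1"
  shows "sat S \<phi> e2"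
proof (rule ccontr)
  assume s2: "\<not> sat S \<phi> e2"
  define \<rho>1 where "\<rho>1 v = 2 * v" for v :: nat
  define \<rho>2 where "\<rho>2 v = (if v \<in> W then 2 * v + 1 else 2 * v)" for v :: nat
  have i1: "inj \<rho>1" unfolding inj_def \<rho>1_def by auto
  have i2: "inj \<rho>2" unfolding \<rho>2_def by (intro injI) (auto split: if_splits; presburger)
  define E where "E v = (if even v then e1 (v div 2) else e2 (v div 2))" for v
  have E1: "E \<circ> \<rho>1 = e1" unfolding E_def \<rho>1_def by (auto simp: fun_eq_iff)
  have E2: "E \<circ> \<rho>2 = e2" unfolding E_def \<rho>2_def using off by (auto simp: fun_eq_iff)
  define \<chi> where "\<chi> = Conj (ren \<rho>1 \<phi>) (Neg (ren \<rho>2 \<phi>))"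
  define V' where "V' = \<rho>1 ` U"
  have sat\<chi>: "sat S \<chi> E" unfolding \<chi>_def sat_in.simps sat_ren[OF i1] sat_ren[OF i2] E1 E2 using s1 s2 by simp
  have fv\<chi>: "fv \<chi> = \<rho>1 ` fv \<phi> \<union> \<rho>2 ` fv \<phi>" unfolding \<chi>_def by (simp add: fv_ren[OF i1] fv_ren[OF i2])
  have a1: "\<forall>v\<in>V'. E v \<in> X" unfolding V'_def using hU E1 by (auto simp: \<rho>1_def E_def)
  have a2: "\<forall>v\<in>fv \<chi> - V'. E v \<in> D"
  proof
    fix v assume v: "v \<in> fv \<chi> - V'"
    then obtain w where w: "w \<in> fv \<phi>" "v = \<rho>1 w \<or> v = \<rho>2 w" using fv\<chi> by auto
    show "E v \<in> D"
    proof (cases "w \<in> W")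
      case True
      then show ?thesis using w hW1 hW2 unfolding \<rho>1_def \<rho>2_def E_def by auto
    next
      case False
      then have "v = 2 * w" using w unfolding \<rho>1_def \<rho>2_def by auto
      moreover have "w \<notin> U" using v \<open>v = 2 * w\<close> unfolding V'_def \<rho>1_def by auto
      ultimately show ?thesis using rest w(1) False MD unfolding E_def by auto
    qed
  qed
  obtain E' where E': "\<forall>v\<in>V'. E' v \<in> M" "\<forall>v. v \<notin> V' \<longrightarrow> E' v = E v" "sat S \<chi> E'"
    using fin_satD[OF fs a1 a2 sat\<chi>] by blast
  have g1: "sat S \<phi> (E' \<circ> \<rho>1)" "\<not> sat S \<phi> (E' \<circ> \<rho>2)"
    using E'(3) unfolding \<chi>_def sat_in.simps sat_ren[OF i1] sat_ren[OF i2] by auto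
  define f where "f v = (if v \<in> U then E' (2 * v) else if v \<in> fv \<phi> then e1 v else m0)" for v
  have fM: "\<forall>v. v \<notin> W \<longrightarrow> f v \<in> M"
    unfolding f_def using E'(1) rest m0 unfolding V'_def \<rho>1_def by auto
  have inV: "2 * v \<in> V' \<longleftrightarrow> v \<in> U" for v unfolding V'_def \<rho>1_def by auto
  have notV: "2 * v + 1 \<notin> V'" for v unfolding V'_def \<rho>1_def by (auto dest: arg_cong[where f=even])
  have c1: "\<forall>v\<in>fv \<phi>. (E' \<circ> \<rho>1) v = ovr f e1 W v"
    unfolding ovr_def f_def \<rho>1_def using E'(2) inV UW by (auto simp: E_def)
  have c2: "\<forall>v\<in>fv \<phi>. (E' \<circ> \<rho>2) v = ovr f e2 W v"
  proof
    fix v assume v: "v \<in> fv \<phi>"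
    show "(E' \<circ> \<rho>2) v = ovr f e2 W v"
    proof (cases "v \<in> W")
      case True
      then show ?thesis using E'(2) notV[of v] unfolding ovr_def \<rho>2_def E_def by auto
    next
      case False
      then show ?thesis using E'(2) inV[of v] v off unfolding ovr_def f_def \<rho>2_def E_def by auto
    qed
  qed
  have "sat S \<phi> (ovr f e1 W)" using g1(1) sat_cong[OF c1] by simp
  moreover have "\<not> sat S \<phi> (ovr f e2 W)" using g1(2) sat_cong[OF c2] by simp
  ultimately show False using sm fM unfolding sameM_def by blast
qed


lemma sameM_cong:
  assumes "sameM S M W a b" "\<forall>v\<in>W. a v = a' v" "\<forall>v\<in>W. b v = b' v"
  shows "sameM S M W a' b'"
proof -
  have "ovr f a W = ovr f a' W" "ovr f b W = ovr f b' W" for f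
    using assms(2,3) unfolding ovr_def by (auto simp: fun_eq_iff)
  then show ?thesis using assms(1) unfolding sameM_def by metis
qed

lemma hard:
  assumes hB: "fin_sat S M B (A \<union> C)" and h2: "fin_sat S M B2 (B1 \<union> C)"
    and BB: "B = B1 \<union> B2" and fu: "full S M C" and m0: "m0 \<in> M"
  shows "fin_sat S M B2 (A \<union> B1 \<union> C)"
proof (rule fin_satI)
  fix \<phi> e V
  assume hV: "\<forall>v\<in>V. e v \<in> B2" and hfv: "\<forall>v\<in>fv \<phi> - V. e v \<in> A \<union> B1 \<union> C"
    and s: "sat S \<phi> e"
  have MC: "M \<subseteq> A \<union> C" using fu unfolding full_def by auto
  define W where "W = {v \<in> fv \<phi> - V. e v \<notin> B1}"
  define U1 where "U1 = {v \<in> fv \<phi> - V. e v \<in> B1}"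
  have fW: "finite W" unfolding W_def by (rule finite_subset[OF _ finite_fv]) auto
  obtain c where c: "\<forall>v\<in>W. c v \<in> C" "sameM S M W e c"
    using full_sameM[OF fu fW m0] by blast
  define e2 where "e2 = ovr e c W"
  have sm1: "sameM S M W e e2"
    by (rule sameM_cong[OF c(2)]) (auto simp: e2_def ovr_def)
  have s2: "sat S \<phi> e2"
  proof (rule inv1[OF hB MC m0 sm1, of "V \<union> U1"])
    show "(V \<union> U1) \<inter> W = {}" unfolding W_def U1_def by auto
    show "\<forall>v\<in>V \<union> U1. e v \<in> B" using hV BB unfolding U1_def by auto
    show "\<forall>v\<in>W. e v \<in> A \<union> C" using hfv unfolding W_def by auto
    show "\<forall>v\<in>W. e2 v \<in> A \<union> C" using c(1) unfolding e2_def ovr_def by auto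
    show "\<forall>v. v \<notin> W \<longrightarrow> e v = e2 v" unfolding e2_def ovr_def by auto
    show "\<forall>v\<in>fv \<phi>. v \<notin> V \<union> U1 \<longrightarrow> v \<notin> W \<longrightarrow> e v \<in> M" unfolding W_def U1_def by auto
    show "sat S \<phi> e" by (rule s)
  qed
  have a1: "\<forall>v\<in>V. e2 v \<in> B2" using hV unfolding e2_def ovr_def W_def by auto
  have a2: "\<forall>v\<in>fv \<phi> - V. e2 v \<in> B1 \<union> C"
    using c(1) unfolding e2_def ovr_def W_def by auto
  obtain e3 where e3: "\<forall>v\<in>V. e3 v \<in> M" "\<forall>v. v \<notin> V \<longrightarrow> e3 v = e2 v" "sat S \<phi> e3"
    using fin_satD[OF h2 a1 a2 s2] by blast
  define e4 where "e4 = ovr e3 e W"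
  have sm2: "sameM S M W e3 e4"
  proof (rule sameM_cong[OF sameM_sym[OF c(2)]])
    show "\<forall>v\<in>W. c v = e3 v" using e3(2) unfolding e2_def ovr_def W_def by auto
    show "\<forall>v\<in>W. e v = e4 v" unfolding e4_def ovr_def by auto
  qed
  have s4: "sat S \<phi> e4"
  proof (rule inv1[OF hB MC m0 sm2, of U1])
    show "U1 \<inter> W = {}" unfolding W_def U1_def by auto
    show "\<forall>v\<in>U1. e3 v \<in> B" using e3(2) BB unfolding U1_def e2_def ovr_def W_def by auto
    show "\<forall>v\<in>W. e3 v \<in> A \<union> C" using e3(2) c(1) unfolding e2_def ovr_def W_def by auto
    show "\<forall>v\<in>W. e4 v \<in> A \<union> C" using hfv unfolding e4_def ovr_def W_def by auto
    show "\<forall>v. v \<notin> W \<longrightarrow> e3 v = e4 v" unfolding e4_def ovr_def by auto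
    show "\<forall>v\<in>fv \<phi>. v \<notin> U1 \<longrightarrow> v \<notin> W \<longrightarrow> e3 v \<in> M" using e3(1) unfolding W_def U1_def by auto
    show "sat S \<phi> e3" by (rule e3(3))
  qed
  show "\<exists>e'. (\<forall>v\<in>V. e' v \<in> M) \<and> (\<forall>v. v \<notin> V \<longrightarrow> e' v = e v) \<and> sat S \<phi> e'"
  proof (intro exI conjI)
    show "\<forall>v\<in>V. e4 v \<in> M" using e3(1) unfolding e4_def ovr_def W_def by auto
    show "\<forall>v. v \<notin> V \<longrightarrow> e4 v = e v" using e3(2) unfolding e4_def e2_def ovr_def by auto
    show "sat S \<phi> e4" by (rule s4)
  qed
qed

theorem lemma2:
  fixes S :: "('a, 'f, 'r) struc" and K :: "'k set"
    and M C A B B1 B2 :: "'a set"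
  assumes "monster S K"
    and "small K M" and "elementary_sub S M"
    and "full S M C" and "small K C"
    and "small K A" and "small K B"
    and "fs_seq S M C [A, B]"
    and "B = B1 \<union> B2" and "B1 \<inter> B2 = {}"
  shows "fs_seq S M C [A, B1, B2] \<longleftrightarrow> fs_seq S M C [B1, B2]"
proof -
  have "M \<noteq> {}" using assms(3) unfolding elementary_sub_def by (rule conjunct1)
  then obtain m0 where m0: "m0 \<in> M" by blast
  have hA: "fin_sat S M A C" and hB: "fin_sat S M B (A \<union> C)" using assms(8) unfolding fs2 by auto
  show ?thesis
  proof
    assume "fs_seq S M C [A, B1, B2]"
    then have b1: "fin_sat S M B1 (A \<union> C)" and b2: "fin_sat S M B2 (A \<union> B1 \<union> C)" unfolding fs3 by auto
    have "fin_sat S M B1 C" by (rule fin_sat_monoD[OF b1]) auto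
    moreover have "fin_sat S M B2 (B1 \<union> C)" by (rule fin_sat_monoD[OF b2]) auto
    ultimately show "fs_seq S M C [B1, B2]" unfolding fs2 by blast
  next
    assume "fs_seq S M C [B1, B2]"
    then have h2: "fin_sat S M B2 (B1 \<union> C)" unfolding fs2 by auto
    have "fin_sat S M B1 (A \<union> C)" using fin_sat_monoX[OF hB] assms(9) by auto
    then show "fs_seq S M C [A, B1, B2]" unfolding fs3
      using hA hard[OF hB h2 assms(9,4) m0] by auto
  qed
qed

end
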